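(* Let $k$ be a field of characteristic $\neq 2$, let $\mathcal O$ be the Lie algebra described in the context, and let $J=q(t)k[t]$ be a nonzero ideal of $k[t]$; put $w_i=v_iq(t)$, $i=0,1,2$. Then the ideals $\mathcal I$ of $\mathcal O$ with $J_{\mathcal I}=J$ are exactly the subspaces $\mathcal I=\mathcal O Jt(t-1)\oplus\mathcal S$ where $\mathcal S$ is of one of the following types: (i) $\mathcal S=k\epsilon(w_0t+w_1t)\oplus k\delta(w_0t-w_1t)\oplus k\epsilon\delta\gamma\, w_2t\oplus k\epsilon'(w_0(t-1)+w_2(t-1))\oplus k\delta'(w_0(t-1)-w_2(t-1))\oplus k\epsilon'\delta'\gamma'\, w_1(t-1)$, where $\epsilon,\delta,\gamma,\epsilon',\delta',\gamma'\in\{0,1\}$ with $\epsilon+\delta\neq0\neq\epsilon'+\delta'$; (ii) $\mathcal S=\mathcal S_\eta=\mathrm{span}\{w_0t,\ w_1t,\ w_0(t-1),\ w_2(t-1),\ w_2t+\eta w_1(t-1)\}$ with $0\neq\eta\in k$.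
   Context: $\mathcal O$ is the Lie algebra over $k$ which is a free $k[t]$-module with basis $v_0,v_1,v_2$, with $k[t]$-bilinear bracket determined by $[v_0,v_1]=-v_2(t-1)$, $[v_1,v_2]=-v_0$, $[v_2,v_0]=v_1t$ (it is isomorphic to the Onsager algebra). For an ideal $\mathcal I$ of $\mathcal O$, $J_{\mathcal I}=\{p(t)\in k[t]: v_0p(t)+v_1p_1(t)+v_2p_2(t)\in\mathcal I\text{ for some }p_1,p_2\in k[t]\}$. For an ideal $J$ of $k[t]$, $\mathcal OJ=v_0J\oplus v_1J\oplus v_2J$, and $\mathcal OJt(t-1)=\mathcal O\,(Jt(t-1))$. *)

theory Defs
  imports "HOL-Computational_Algebra.Polynomial"
begin

text \<open>The Lie algebra O: free k[t]-module with basis v0, v1, v2; an element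
  v0 a + v1 b + v2 c is represented by the triple (a, b, c) of polynomials.\<close>

type_synonym 'a onsager = "'a poly \<times> 'a poly \<times> 'a poly"

definition ozero :: "'a::field onsager" where
  "ozero = (0, 0, 0)"

definition oadd :: "'a::field onsager \<Rightarrow> 'a onsager \<Rightarrow> 'a onsager" where
  "oadd x y = (case x of (a0, a1, a2) \<Rightarrow> case y of (b0, b1, b2) \<Rightarrow> (a0 + b0, a1 + b1, a2 + b2))"

definition osmult :: "'a::field \<Rightarrow> 'a onsager \<Rightarrow> 'a onsager" where
  "osmult c x = (case x of (a0, a1, a2) \<Rightarrow> (smult c a0, smult c a1, smult c a2))"

definition ov0 :: "'a::field poly \<Rightarrow> 'a onsager" where "ov0 p = (p, 0, 0)"
definition ov1 :: "'a::field poly \<Rightarrow> 'a onsager" where "ov1 p = (0, p, 0)"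
definition ov2 :: "'a::field poly \<Rightarrow> 'a onsager" where "ov2 p = (0, 0, p)"

text \<open>The k[t]-bilinear bracket determined by
  [v0,v1] = -v2(t-1), [v1,v2] = -v0, [v2,v0] = v1 t (and antisymmetry).\<close>
definition obracket :: "'a::field onsager \<Rightarrow> 'a onsager \<Rightarrow> 'a onsager" where
  "obracket x y = (case x of (a0, a1, a2) \<Rightarrow> case y of (b0, b1, b2) \<Rightarrow>
     (- (a1 * b2 - a2 * b1),
      [:0, 1:] * (a2 * b0 - a0 * b2),
      - ([:-1, 1:] * (a0 * b1 - a1 * b0))))"

definition is_lie_ideal :: "'a::field onsager set \<Rightarrow> bool" where
  "is_lie_ideal I \<longleftrightarrow>
     ozero \<in> I \<and>
     (\<forall>x\<in>I. \<forall>y\<in>I. oadd x y \<in> I) \<and>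
     (\<forall>c. \<forall>x\<in>I. osmult c x \<in> I) \<and>
     (\<forall>x\<in>I. \<forall>y. obracket x y \<in> I)"

definition J_of :: "'a::field onsager set \<Rightarrow> 'a poly set" where
  "J_of I = {p. \<exists>p1 p2. (p, p1, p2) \<in> I}"

definition pideal :: "'a::field poly \<Rightarrow> 'a poly set" where
  "pideal q = {q * p | p. True}"

definition OJ :: "'a::field poly set \<Rightarrow> 'a onsager set" where
  "OJ J = {(a, b, c) | a b c. a \<in> J \<and> b \<in> J \<and> c \<in> J}"

fun kspan :: "'a::field onsager list \<Rightarrow> 'a onsager set" where
  "kspan [] = {ozero}"
| "kspan (x # xs) = {oadd (osmult c x) y | c y. y \<in> kspan xs}"

definition is_direct_sum :: "'a::field onsager set \<Rightarrow> 'a onsager set \<Rightarrow> 'a onsager set \<Rightarrow> bool" where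
  "is_direct_sum I A S \<longleftrightarrow> I = {oadd a s | a s. a \<in> A \<and> s \<in> S} \<and> A \<inter> S = {ozero}"

abbreviation pt :: "'a::field poly" where "pt \<equiv> [:0, 1:]"
abbreviation ptm1 :: "'a::field poly" where "ptm1 \<equiv> [:-1, 1:]"

definition type_i :: "'a::field poly \<Rightarrow> 'a onsager set \<Rightarrow> bool" where
  "type_i q S \<longleftrightarrow> (\<exists>\<epsilon> \<delta> \<gamma> \<epsilon>' \<delta>' \<gamma>'.
     \<epsilon> \<in> {0, 1} \<and> \<delta> \<in> {0, 1} \<and> \<gamma> \<in> {0, 1} \<and> \<epsilon>' \<in> {0, 1} \<and> \<delta>' \<in> {0, 1} \<and> \<gamma>' \<in> {0, 1} \<and>
     \<epsilon> + \<delta> \<noteq> 0 \<and> \<epsilon>' + \<delta>' \<noteq> 0 \<and>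
     S = kspan
       [osmult \<epsilon> (oadd (ov0 (q * pt)) (ov1 (q * pt))),
        osmult \<delta> (oadd (ov0 (q * pt)) (osmult (-1) (ov1 (q * pt)))),
        osmult (\<epsilon> * \<delta> * \<gamma>) (ov2 (q * pt)),
        osmult \<epsilon>' (oadd (ov0 (q * ptm1)) (ov2 (q * ptm1))),
        osmult \<delta>' (oadd (ov0 (q * ptm1)) (osmult (-1) (ov2 (q * ptm1)))),
        osmult (\<epsilon>' * \<delta>' * \<gamma>') (ov1 (q * ptm1))])"

definition type_ii :: "'a::field poly \<Rightarrow> 'a onsager set \<Rightarrow> bool" where
  "type_ii q S \<longleftrightarrow> (\<exists>\<eta>. \<eta> \<noteq> 0 \<and>
     S = kspan
       [ov0 (q * pt), ov1 (q * pt), ov0 (q * ptm1), ov2 (q * ptm1),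
        oadd (ov2 (q * pt)) (osmult \<eta> (ov1 (q * ptm1)))])"

end

theory Submission
  imports Defs
begin


lemma two_ne0:
  assumes "CHAR('a::field) \<noteq> 2" shows "(2::'a) \<noteq> 0"
proof
  assume "(2::'a) = 0"
  hence "of_nat 2 = (0::'a)" by simp
  hence "CHAR('a) dvd 2" by (simp only: of_nat_eq_0_iff_char_dvd)
  hence "CHAR('a) \<in> {1,2}" using dvd_imp_le[of "CHAR('a)" 2] 
    by (cases "CHAR('a)") (auto simp: less_Suc_eq_le le_Suc_eq)
  thus False using assms CHAR_not_1'[where 'a='a] by auto
qed

lemma vanish01:
  fixes p :: "'a::field poly"
  assumes "poly p 0 = 0" "poly p 1 = 0"
  shows "\<exists>h. p = pt * ptm1 * h"
proof -
  from assms(1) have "[:-0,1:] dvd p" by (simp only: poly_eq_0_iff_dvd)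
  then obtain g where g: "p = pt * g" by auto
  with assms(2) have "poly g 1 = 0" by simp
  hence "[:-1,1:] dvd g" by (simp only: poly_eq_0_iff_dvd)
  then obtain h where "g = ptm1 * h" by auto
  with g show ?thesis by (auto simp: mult.assoc)
qed

lemma pideal_A:
  fixes q :: "'a::field poly"
  shows "p \<in> pideal (q*pt*ptm1) \<longleftrightarrow> (\<exists>p'. p = q*p' \<and> poly p' 0 = 0 \<and> poly p' 1 = 0)"
proof
  assume "p \<in> pideal (q*pt*ptm1)"
  then obtain r where "p = q*pt*ptm1*r" by (auto simp: pideal_def)
  thus "\<exists>p'. p = q*p' \<and> poly p' 0 = 0 \<and> poly p' 1 = 0"
    by (intro exI[of _ "pt*ptm1*r"]) (simp only: mult.assoc, simp)
next
  assume "\<exists>p'. p = q*p' \<and> poly p' 0 = 0 \<and> poly p' 1 = 0"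
  then obtain p' where "p = q*p'" "poly p' 0 = 0" "poly p' 1 = 0" by blast
  moreover from vanish01[OF this(2,3)] obtain h where "p' = pt*ptm1*h" by blast
  ultimately have "p = q*pt*ptm1*h" by (simp only: mult.assoc)
  thus "p \<in> pideal (q*pt*ptm1)" unfolding pideal_def by blast
qed

lemma interp:
  fixes p :: "'a::field poly"
  shows "\<exists>h. p = [:poly p 0, poly p 1 - poly p 0:] + pt*ptm1*h"
proof -
  have "poly (p - [:poly p 0, poly p 1 - poly p 0:]) 0 = 0"
       "poly (p - [:poly p 0, poly p 1 - poly p 0:]) 1 = 0" by simp_all
  from vanish01[OF this] obtain h where "p - [:poly p 0, poly p 1 - poly p 0:] = pt*ptm1*h" by blast
  thus ?thesis by (intro exI[of _ h]) (simp add: algebra_simps)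
qed

definition mk :: "'a::field poly \<Rightarrow> 'a\<Rightarrow>'a\<Rightarrow>'a\<Rightarrow>'a\<Rightarrow>'a\<Rightarrow>'a \<Rightarrow> 'a onsager" where
  "mk q x0 x1 x2 y0 y1 y2 = (q*[:x0, y0-x0:], q*[:x1, y1-x1:], q*[:x2, y2-x2:])"

definition Iset :: "'a::field poly \<Rightarrow> ('a\<Rightarrow>'a\<Rightarrow>'a\<Rightarrow>'a\<Rightarrow>'a\<Rightarrow>'a\<Rightarrow>bool) \<Rightarrow> 'a onsager set" where
  "Iset q W = {(q*a, q*b, q*c) | a b c. W (poly a 0) (poly b 0) (poly c 0) (poly a 1) (poly b 1) (poly c 1)}"

definition Sset :: "'a::field poly \<Rightarrow> ('a\<Rightarrow>'a\<Rightarrow>'a\<Rightarrow>'a\<Rightarrow>'a\<Rightarrow>'a\<Rightarrow>bool) \<Rightarrow> 'a onsager set" where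
  "Sset q W = {mk q x0 x1 x2 y0 y1 y2 | x0 x1 x2 y0 y1 y2. W x0 x1 x2 y0 y1 y2}"

lemma inA:
  fixes q :: "'a::field poly"
  shows "(a,b,c) \<in> OJ (pideal (q*pt*ptm1)) \<longleftrightarrow> (\<exists>a' b' c'. a = q*a' \<and> b = q*b' \<and> c = q*c' \<and>
    poly a' 0 = 0 \<and> poly a' 1 = 0 \<and> poly b' 0 = 0 \<and> poly b' 1 = 0 \<and> poly c' 0 = 0 \<and> poly c' 1 = 0)"
  unfolding OJ_def pideal_A by blast

lemma sum_eq:
  fixes q :: "'a::field poly"
  assumes "q \<noteq> 0" "W 0 0 0 0 0 0"
  shows "{oadd a s | a s. a \<in> OJ (pideal (q*pt*ptm1)) \<and> s \<in> Sset q W} = Iset q W"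
proof (intro equalityI subsetI)
  fix u assume "u \<in> {oadd a s | a s. a \<in> OJ (pideal (q*pt*ptm1)) \<and> s \<in> Sset q W}"
  then obtain a s where u: "u = oadd a s" and a: "a \<in> OJ (pideal (q*pt*ptm1))" and s: "s \<in> Sset q W" by blast
  obtain a0 a1 a2 where aa: "a = (a0,a1,a2)" by (cases a) auto
  from a[unfolded aa inA] obtain a' b' c' where A: "a0 = q*a'" "a1 = q*b'" "a2 = q*c'"
    "poly a' 0 = 0" "poly a' 1 = 0" "poly b' 0 = 0" "poly b' 1 = 0" "poly c' 0 = 0" "poly c' 1 = 0" by blast
  from s obtain x0 x1 x2 y0 y1 y2 where s': "s = mk q x0 x1 x2 y0 y1 y2" "W x0 x1 x2 y0 y1 y2"
    unfolding Sset_def by blast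
  have "u = (q*(a' + [:x0, y0-x0:]), q*(b' + [:x1, y1-x1:]), q*(c' + [:x2, y2-x2:]))"
    unfolding u aa s' A mk_def oadd_def by (simp add: algebra_simps)
  moreover have "W (poly (a' + [:x0, y0-x0:]) 0) (poly (b' + [:x1, y1-x1:]) 0) (poly (c' + [:x2, y2-x2:]) 0)
     (poly (a' + [:x0, y0-x0:]) 1) (poly (b' + [:x1, y1-x1:]) 1) (poly (c' + [:x2, y2-x2:]) 1)"
    using s'(2) A by simp
  ultimately show "u \<in> Iset q W" unfolding Iset_def by blast
next
  fix u assume "u \<in> Iset q W"
  then obtain a b c where u: "u = (q*a, q*b, q*c)"
    and W: "W (poly a 0) (poly b 0) (poly c 0) (poly a 1) (poly b 1) (poly c 1)"
    unfolding Iset_def by blast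
  define s where "s = mk q (poly a 0) (poly b 0) (poly c 0) (poly a 1) (poly b 1) (poly c 1)"
  define aa where "aa = (q*(a - [:poly a 0, poly a 1 - poly a 0:]), q*(b - [:poly b 0, poly b 1 - poly b 0:]),
     q*(c - [:poly c 0, poly c 1 - poly c 0:]))"
  have "s \<in> Sset q W" unfolding s_def Sset_def using W by blast
  moreover have "aa \<in> OJ (pideal (q*pt*ptm1))" unfolding aa_def inA
    by (intro exI conjI, rule refl, rule refl, rule refl) simp_all
  moreover have "u = oadd aa s" unfolding u aa_def s_def mk_def oadd_def by (simp add: algebra_simps)
  ultimately show "u \<in> {oadd a s | a s. a \<in> OJ (pideal (q*pt*ptm1)) \<and> s \<in> Sset q W}" by blast
qed

lemma inter_eq:
  fixes q :: "'a::field poly"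
  assumes "q \<noteq> 0" "W 0 0 0 0 0 0"
  shows "OJ (pideal (q*pt*ptm1)) \<inter> Sset q W = {ozero}"
proof (intro equalityI subsetI)
  fix s assume "s \<in> OJ (pideal (q*pt*ptm1)) \<inter> Sset q W"
  then obtain x0 x1 x2 y0 y1 y2 where s: "s = mk q x0 x1 x2 y0 y1 y2" 
    and A: "mk q x0 x1 x2 y0 y1 y2 \<in> OJ (pideal (q*pt*ptm1))"
    unfolding Sset_def by blast
  from A[unfolded mk_def inA] obtain a' b' c' where
    "q*[:x0, y0-x0:] = q*a'" "q*[:x1, y1-x1:] = q*b'" "q*[:x2, y2-x2:] = q*c'"
    "poly a' 0 = 0" "poly a' 1 = 0" "poly b' 0 = 0" "poly b' 1 = 0" "poly c' 0 = 0" "poly c' 1 = 0" by blast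
  with assms(1) have "[:x0, y0-x0:] = a'" "[:x1, y1-x1:] = b'" "[:x2, y2-x2:] = c'" by (simp_all only: mult_left_cancel[OF assms(1)])
  with \<open>poly a' 0 = 0\<close> \<open>poly a' 1 = 0\<close> \<open>poly b' 0 = 0\<close> \<open>poly b' 1 = 0\<close> \<open>poly c' 0 = 0\<close> \<open>poly c' 1 = 0\<close>
  have "x0 = 0" "y0 = 0" "x1 = 0" "y1 = 0" "x2 = 0" "y2 = 0" by auto
  thus "s \<in> {ozero}" unfolding s mk_def ozero_def by simp
next
  fix s :: "'a onsager" assume "s \<in> {ozero}"
  hence s: "s = mk q 0 0 0 0 0 0" by (simp add: mk_def ozero_def)
  have "s \<in> Sset q W" unfolding s Sset_def using assms(2) by blast
  moreover have "s \<in> OJ (pideal (q*pt*ptm1))" unfolding s mk_def inA by (intro exI[of _ 0] conjI) simp_all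
  ultimately show "s \<in> OJ (pideal (q*pt*ptm1)) \<inter> Sset q W" by blast
qed

lemma decomp:
  fixes q :: "'a::field poly"
  assumes "q \<noteq> 0" "W 0 0 0 0 0 0"
  shows "is_direct_sum I (OJ (pideal (q*pt*ptm1))) (Sset q W) \<longleftrightarrow> I = Iset q W"
  using sum_eq[of q W] inter_eq[of q W] assms unfolding is_direct_sum_def by blast

definition goodW :: "('a::field\<Rightarrow>'a\<Rightarrow>'a\<Rightarrow>'a\<Rightarrow>'a\<Rightarrow>'a\<Rightarrow>bool) \<Rightarrow> bool" where
  "goodW W \<longleftrightarrow> W 0 0 0 0 0 0 \<and>
    (\<forall>a0 b0 c0 a1 b1 c1 a0' b0' c0' a1' b1' c1'. W a0 b0 c0 a1 b1 c1 \<longrightarrow> W a0' b0' c0' a1' b1' c1' \<longrightarrow>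
       W (a0+a0') (b0+b0') (c0+c0') (a1+a1') (b1+b1') (c1+c1')) \<and>
    (\<forall>r a0 b0 c0 a1 b1 c1. W a0 b0 c0 a1 b1 c1 \<longrightarrow> W (r*a0) (r*b0) (r*c0) (r*a1) (r*b1) (r*c1)) \<and>
    (\<forall>a0 b0 c0 a1 b1 c1 f0 g0 h0 f1 g1 h1. W a0 b0 c0 a1 b1 c1 \<longrightarrow>
       W (c0*g0 - b0*h0) 0 (a0*g0 - b0*f0) (c1*g1 - b1*h1) (c1*f1 - a1*h1) 0) \<and>
    (\<forall>\<alpha> \<beta>. \<exists>x1 x2 y1 y2. W \<alpha> x1 x2 \<beta> y1 y2)"

lemma bracket_q:
  fixes q :: "'a::field poly"
  shows "obracket (q*a, q*b, q*c) (f, g, h) = (q*(c*g - b*h), q*(pt*(c*f - a*h)), q*(ptm1*(b*f - a*g)))"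
  by (simp add: obracket_def algebra_simps)

lemma ideal_of:
  fixes q :: "'a::field poly"
  assumes "goodW W"
  shows "is_lie_ideal (Iset q W) \<and> J_of (Iset q W) = pideal q"
proof -
  note G = assms[unfolded goodW_def]
  have z: "ozero \<in> Iset q W" unfolding Iset_def ozero_def
    using G by (intro CollectI exI[of _ 0] conjI) auto
  have ad: "oadd x y \<in> Iset q W" if "x \<in> Iset q W" "y \<in> Iset q W" for x y
  proof -
    from that obtain a b c a' b' c' where x: "x = (q*a, q*b, q*c)" and y: "y = (q*a', q*b', q*c')"
      and W1: "W (poly a 0) (poly b 0) (poly c 0) (poly a 1) (poly b 1) (poly c 1)"
      and W2: "W (poly a' 0) (poly b' 0) (poly c' 0) (poly a' 1) (poly b' 1) (poly c' 1)"
      unfolding Iset_def by blast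
    have "oadd x y = (q*(a+a'), q*(b+b'), q*(c+c'))" unfolding x y oadd_def by (simp add: algebra_simps)
    moreover have "W (poly (a+a') 0) (poly (b+b') 0) (poly (c+c') 0) (poly (a+a') 1) (poly (b+b') 1) (poly (c+c') 1)"
      using G W1 W2 by simp
    ultimately show ?thesis unfolding Iset_def by blast
  qed
  have sm: "osmult r x \<in> Iset q W" if "x \<in> Iset q W" for x r
  proof -
    from that obtain a b c where x: "x = (q*a, q*b, q*c)"
      and W1: "W (poly a 0) (poly b 0) (poly c 0) (poly a 1) (poly b 1) (poly c 1)"
      unfolding Iset_def by blast
    have "osmult r x = (q*smult r a, q*smult r b, q*smult r c)" unfolding x osmult_def by simp
    moreover have "W (poly (smult r a) 0) (poly (smult r b) 0) (poly (smult r c) 0) (poly (smult r a) 1) (poly (smult r b) 1) (poly (smult r c) 1)"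
      using G W1 by simp
    ultimately show ?thesis unfolding Iset_def by blast
  qed
  have br: "obracket x y \<in> Iset q W" if "x \<in> Iset q W" for x y
  proof -
    from that obtain a b c where x: "x = (q*a, q*b, q*c)"
      and W1: "W (poly a 0) (poly b 0) (poly c 0) (poly a 1) (poly b 1) (poly c 1)"
      unfolding Iset_def by blast
    obtain f g h where y: "y = (f,g,h)" by (cases y) auto
    have e: "obracket x y = (q*(c*g - b*h), q*(pt*(c*f - a*h)), q*(ptm1*(b*f - a*g)))"
      unfolding x y by (rule bracket_q)
    have "W (poly c 0 * poly g 0 - poly b 0 * poly h 0) 0 (poly a 0 * poly g 0 - poly b 0 * poly f 0)
            (poly c 1 * poly g 1 - poly b 1 * poly h 1) (poly c 1 * poly f 1 - poly a 1 * poly h 1) 0"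
      using G W1 by blast
    moreover have "poly (c*g - b*h) 0 = poly c 0 * poly g 0 - poly b 0 * poly h 0"
      "poly (pt*(c*f - a*h)) 0 = 0" "poly (ptm1*(b*f - a*g)) 0 = poly a 0 * poly g 0 - poly b 0 * poly f 0"
      "poly (c*g - b*h) 1 = poly c 1 * poly g 1 - poly b 1 * poly h 1"
      "poly (pt*(c*f - a*h)) 1 = poly c 1 * poly f 1 - poly a 1 * poly h 1"
      "poly (ptm1*(b*f - a*g)) 1 = 0"
      by (simp_all add: algebra_simps)
    ultimately have "W (poly (c*g - b*h) 0) (poly (pt*(c*f - a*h)) 0) (poly (ptm1*(b*f - a*g)) 0)
        (poly (c*g - b*h) 1) (poly (pt*(c*f - a*h)) 1) (poly (ptm1*(b*f - a*g)) 1)" by simp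
    thus ?thesis unfolding e Iset_def by blast
  qed
  have J: "J_of (Iset q W) = pideal q"
  proof (intro equalityI subsetI)
    fix p assume "p \<in> J_of (Iset q W)"
    then show "p \<in> pideal q" unfolding J_of_def Iset_def pideal_def by blast
  next
    fix p assume "p \<in> pideal q"
    then obtain r where p: "p = q*r" unfolding pideal_def by blast
    have "\<forall>\<alpha> \<beta>. \<exists>x1 x2 y1 y2. W \<alpha> x1 x2 \<beta> y1 y2" using G by blast
    then obtain x1 x2 y1 y2 where "W (poly r 0) x1 x2 (poly r 1) y1 y2" by blast
    hence "W (poly r 0) (poly [:x1, y1-x1:] 0) (poly [:x2, y2-x2:] 0) (poly r 1) (poly [:x1, y1-x1:] 1) (poly [:x2, y2-x2:] 1)"
      by simp
    hence "(q*r, q*[:x1, y1-x1:], q*[:x2, y2-x2:]) \<in> Iset q W" unfolding Iset_def by blast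
    thus "p \<in> J_of (Iset q W)" unfolding J_of_def p by blast
  qed
  show ?thesis unfolding is_lie_ideal_def using z ad sm br J by blast
qed

lemma fwd:
  fixes q :: "'a::field poly" and I :: "'a onsager set"
  assumes I: "is_lie_ideal I" and J: "J_of I = pideal q" and q: "q \<noteq> 0"
  shows "\<exists>W. goodW W \<and> I = Iset q W"
proof -
  note Id = I[unfolded is_lie_ideal_def]
  have z: "ozero \<in> I" and ad: "\<And>x y. x \<in> I \<Longrightarrow> y \<in> I \<Longrightarrow> oadd x y \<in> I"
    and sm: "\<And>r x. x \<in> I \<Longrightarrow> osmult r x \<in> I" and br: "\<And>x y. x \<in> I \<Longrightarrow> obracket x y \<in> I"
    using Id by blast+
  have inJ: "a \<in> pideal q" if "(a,b,c) \<in> I" for a b c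
    using that J unfolding J_of_def by blast
  have qdiv: "\<exists>a' b' c'. a = q*a' \<and> b = q*b' \<and> c = q*c'" if H: "(a,b,c) \<in> I" for a b c
  proof -
    have "\<exists>p1 p2. obracket (a,b,c) (0,1,0) = (c,p1,p2)" by (simp add: obracket_def)
    then obtain p1 p2 where "(c,p1,p2) \<in> I" using br[OF H] by metis
    hence "c \<in> pideal q" by (rule inJ)
    have "\<exists>p1 p2. obracket (a,b,c) (0,0,1) = (-b,p1,p2)" by (simp add: obracket_def)
    then obtain p1 p2 where "(-b,p1,p2) \<in> I" using br[OF H] by metis
    hence "-b \<in> pideal q" by (rule inJ)
    then obtain r where "-b = q*r" unfolding pideal_def by blast
    hence "b = q*(-r)" by (simp add: algebra_simps) (metis minus_equation_iff)
    with inJ[OF H] \<open>c \<in> pideal q\<close> show ?thesis unfolding pideal_def by blast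
  qed
  have gen: "(q*pt*ptm1*r1, q*pt*ptm1*r2, q*pt*ptm1*r3) \<in> I" for r1 r2 r3
  proof -
    have e1: "(q*pt*ptm1*r, 0, 0) \<in> I" and e2: "(0, q*pt*ptm1*r, 0) \<in> I" and e3: "(0, 0, q*pt*ptm1*r) \<in> I" for r
    proof -
      have "q*r \<in> pideal q" unfolding pideal_def by blast
      then obtain p1 p2 where e: "(q*r,p1,p2) \<in> I" unfolding J[symmetric] J_of_def by blast
      have "obracket (obracket (q*r,p1,p2) (0,1,0)) (-1,0,0) = (0, q*pt*ptm1*r, 0)"
        by (simp add: obracket_def algebra_simps)
      with br[OF br[OF e]] show "(0, q*pt*ptm1*r, 0) \<in> I" by metis
      have "obracket (obracket (q*r,p1,p2) (0,0,1)) (-1,0,0) = (0, 0, q*pt*ptm1*r)"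
        by (simp add: obracket_def algebra_simps)
      with br[OF br[OF e]] show E3: "(0, 0, q*pt*ptm1*r) \<in> I" by metis
      have "obracket (0, 0, q*pt*ptm1*r) (0,1,0) = (q*pt*ptm1*r, 0, 0)"
        by (simp add: obracket_def algebra_simps)
      with br[OF E3] show "(q*pt*ptm1*r, 0, 0) \<in> I" by metis
    qed
    have "oadd (q*pt*ptm1*r1, 0, 0) (oadd (0, q*pt*ptm1*r2, 0) (0, 0, q*pt*ptm1*r3)) \<in> I"
      using ad e1 e2 e3 by blast
    thus ?thesis by (simp add: oadd_def)
  qed
  have AI: "x \<in> I" if "x \<in> OJ (pideal (q*pt*ptm1))" for x
    using that gen unfolding OJ_def pideal_def by auto
  have sub: "oadd x (osmult (-1) y) \<in> I" if "x \<in> I" "y \<in> I" for x y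
    using ad sm that by blast
  define W where "W = (\<lambda>x0 x1 x2 y0 y1 y2. \<exists>a b c. (q*a,q*b,q*c) \<in> I \<and> poly a 0 = x0 \<and> poly b 0 = x1 \<and>
     poly c 0 = x2 \<and> poly a 1 = y0 \<and> poly b 1 = y1 \<and> poly c 1 = y2)"
  have eqI: "I = Iset q W"
  proof (intro equalityI subsetI)
    fix x assume x: "x \<in> I"
    obtain a b c where xx: "x = (a,b,c)" by (cases x) auto
    from qdiv[OF x[unfolded xx]] obtain a' b' c' where "a = q*a'" "b = q*b'" "c = q*c'" by blast
    with x xx show "x \<in> Iset q W" unfolding Iset_def W_def by blast
  next
    fix x assume "x \<in> Iset q W"
    then obtain a b c where x: "x = (q*a, q*b, q*c)"
      and "W (poly a 0) (poly b 0) (poly c 0) (poly a 1) (poly b 1) (poly c 1)"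
      unfolding Iset_def by blast
    then obtain a' b' c' where y: "(q*a', q*b', q*c') \<in> I" and v: "poly a' 0 = poly a 0" "poly b' 0 = poly b 0"
      "poly c' 0 = poly c 0" "poly a' 1 = poly a 1" "poly b' 1 = poly b 1" "poly c' 1 = poly c 1"
      unfolding W_def by blast
    have "(q*(a-a'), q*(b-b'), q*(c-c')) \<in> OJ (pideal (q*pt*ptm1))" unfolding inA
      by (intro exI conjI, rule refl, rule refl, rule refl) (simp_all add: v)
    hence "oadd (q*(a-a'), q*(b-b'), q*(c-c')) (q*a', q*b', q*c') \<in> I" using AI ad y by blast
    moreover have "oadd (q*(a-a'), q*(b-b'), q*(c-c')) (q*a', q*b', q*c') = x"
      unfolding x oadd_def by (simp add: algebra_simps)
    ultimately show "x \<in> I" by simp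
  qed
  have g1: "W 0 0 0 0 0 0" unfolding W_def using z
    by (intro exI[of _ 0]) (simp add: ozero_def)
  have g2: "W (a0+a0') (b0+b0') (c0+c0') (a1+a1') (b1+b1') (c1+c1')"
    if "W a0 b0 c0 a1 b1 c1" "W a0' b0' c0' a1' b1' c1'" for a0 b0 c0 a1 b1 c1 a0' b0' c0' a1' b1' c1'
  proof -
    from that obtain a b c a' b' c' where
      "(q*a,q*b,q*c) \<in> I" "poly a 0 = a0" "poly b 0 = b0" "poly c 0 = c0" "poly a 1 = a1" "poly b 1 = b1" "poly c 1 = c1"
      "(q*a',q*b',q*c') \<in> I" "poly a' 0 = a0'" "poly b' 0 = b0'" "poly c' 0 = c0'" "poly a' 1 = a1'" "poly b' 1 = b1'" "poly c' 1 = c1'"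
      unfolding W_def by blast
    moreover from ad[OF this(1) this(8)] have "(q*(a+a'), q*(b+b'), q*(c+c')) \<in> I"
      by (simp add: oadd_def algebra_simps)
    ultimately show ?thesis unfolding W_def by (intro exI[of _ "a+a'"] exI[of _ "b+b'"] exI[of _ "c+c'"]) simp
  qed
  have g3: "W (r*a0) (r*b0) (r*c0) (r*a1) (r*b1) (r*c1)"
    if "W a0 b0 c0 a1 b1 c1" for r a0 b0 c0 a1 b1 c1
  proof -
    from that obtain a b c where
      "(q*a,q*b,q*c) \<in> I" "poly a 0 = a0" "poly b 0 = b0" "poly c 0 = c0" "poly a 1 = a1" "poly b 1 = b1" "poly c 1 = c1"
      unfolding W_def by blast
    moreover from sm[OF this(1)] have "(q*smult r a, q*smult r b, q*smult r c) \<in> I"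
      by (simp add: osmult_def)
    ultimately show ?thesis unfolding W_def by (intro exI[of _ "smult r a"] exI[of _ "smult r b"] exI[of _ "smult r c"]) simp
  qed
  have g4: "W (c0*g0 - b0*h0) 0 (a0*g0 - b0*f0) (c1*g1 - b1*h1) (c1*f1 - a1*h1) 0"
    if "W a0 b0 c0 a1 b1 c1" for a0 b0 c0 a1 b1 c1 f0 g0 h0 f1 g1 h1
  proof -
    from that obtain a b c where
      m: "(q*a,q*b,q*c) \<in> I" and v: "poly a 0 = a0" "poly b 0 = b0" "poly c 0 = c0" "poly a 1 = a1" "poly b 1 = b1" "poly c 1 = c1"
      unfolding W_def by blast
    define f g h where "f = [:f0, f1-f0:]" and "g = [:g0, g1-g0:]" and "h = [:h0, h1-h0:]"
    have "obracket (q*a,q*b,q*c) (f,g,h) \<in> I" using br[OF m] .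
    hence m2: "(q*(c*g - b*h), q*(pt*(c*f - a*h)), q*(ptm1*(b*f - a*g))) \<in> I" by (simp only: bracket_q)
    have "poly (c*g - b*h) 0 = c0*g0 - b0*h0"
      "poly (pt*(c*f - a*h)) 0 = 0" "poly (ptm1*(b*f - a*g)) 0 = a0*g0 - b0*f0"
      "poly (c*g - b*h) 1 = c1*g1 - b1*h1"
      "poly (pt*(c*f - a*h)) 1 = c1*f1 - a1*h1"
      "poly (ptm1*(b*f - a*g)) 1 = 0"
      by (simp_all add: v f_def g_def h_def algebra_simps)
    with m2 show ?thesis unfolding W_def by metis
  qed
  have g5: "\<exists>x1 x2 y1 y2. W \<alpha> x1 x2 \<beta> y1 y2" for \<alpha> \<beta>
  proof -
    have "q*[:\<alpha>, \<beta>-\<alpha>:] \<in> pideal q" unfolding pideal_def by blast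
    then obtain p1 p2 where e: "(q*[:\<alpha>, \<beta>-\<alpha>:],p1,p2) \<in> I" unfolding J[symmetric] J_of_def by blast
    from qdiv[OF e] obtain b c where "p1 = q*b" "p2 = q*c" by blast
    with e have "W (poly [:\<alpha>, \<beta>-\<alpha>:] 0) (poly b 0) (poly c 0) (poly [:\<alpha>, \<beta>-\<alpha>:] 1) (poly b 1) (poly c 1)"
      unfolding W_def by blast
    thus ?thesis by auto
  qed
  have "goodW W" unfolding goodW_def
    by (intro conjI allI impI; (rule g1 g5 | erule (1) g2 | erule g3 | erule g4))
  with eqI show ?thesis by blast
qed



definition cond1 :: "nat \<Rightarrow> 'a::field \<Rightarrow> 'a \<Rightarrow> 'a \<Rightarrow> bool" where
  "cond1 i a b c = (if i = 0 then b = a \<and> c = 0 else if i = 1 then b = -a \<and> c = 0 else if i = 2 then c = 0 else True)"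

lemma point:
  fixes Y P :: "'a::field \<Rightarrow> 'a \<Rightarrow> 'a \<Rightarrow> bool"
  assumes Yadd: "\<And>a b c a' b' c'. Y a b c \<Longrightarrow> Y a' b' c' \<Longrightarrow> Y (a+a') (b+b') (c+c')"
    and Ysm: "\<And>r a b c. Y a b c \<Longrightarrow> Y (r*a) (r*b) (r*c)"
    and YP: "\<And>a b c. Y a b c \<Longrightarrow> P a b c"
    and FP: "\<And>a b c f g h. P a b c \<Longrightarrow> Y (c*g - b*h) (c*f - a*h) 0"
    and ex: "P 1 s t"
  shows "\<exists>i<4. (\<forall>a b c. Y a b c \<longleftrightarrow> cond1 i a b c) \<and> (i \<noteq> 2 \<longrightarrow> (\<forall>a b c. P a b c \<longrightarrow> Y a b c))"
proof -
  have Ysub: "Y (a-a') (b-b') (c-c')" if "Y a b c" "Y a' b' c'" for a b c a' b' c'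
    using Yadd[OF that(1) Ysm[OF that(2), of "-1"]] by simp
  have "Y (t*0 - s*1) (t*0 - 1*1) 0" by (rule FP[OF ex])
  hence Y1: "Y (-s) (-1) 0" by simp
  have "Y (0*0 - (-1)*1) (0*0 - (-s)*1) 0" by (rule FP[OF YP[OF Y1]])
  hence Y1s: "Y 1 s 0" by simp
  have "Y ((-1)*(-s)) ((-1)*(-1)) ((-1)*0)" by (rule Ysm[OF Y1])
  hence Ys1: "Y s 1 0" by simp
  show ?thesis
  proof (cases "Y 1 0 0 \<and> Y 0 1 0")
    case True
    hence e0: "Y 1 0 0" and e1: "Y 0 1 0" by auto
    have ab: "Y a b 0" for a b
      using Yadd[OF Ysm[OF e0, of a] Ysm[OF e1, of b]] by simp
    show ?thesis
    proof (cases "Y 0 0 1")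
      case True
      have "Y a b c" for a b c
        using Yadd[OF ab[of a b] Ysm[OF True, of c]] by simp
      thus ?thesis by (intro exI[of _ 3]) (simp add: cond1_def)
    next
      case False
      have "Y a b c \<longleftrightarrow> c = 0" for a b c
      proof
        assume H: "Y a b c"
        show "c = 0"
        proof (rule ccontr)
          assume "c \<noteq> 0"
          have "Y (a-a) (b-b) (c-0)" by (rule Ysub[OF H ab])
          hence "Y 0 0 c" by simp
          from Ysm[OF this, of "1/c"] \<open>c \<noteq> 0\<close> have "Y 0 0 1" by simp
          with False show False by simp
        qed
      next
        assume "c = 0" thus "Y a b c" using ab by simp
      qed
      thus ?thesis by (intro exI[of _ 2]) (simp add: cond1_def)
    qed
  next
    case False
    have Pc: "c = 0" if H: "P a b c" for a b c
    proof (rule ccontr)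
      assume "c \<noteq> 0"
      have "Y (c*(1/c) - b*0) (c*0 - a*0) 0" by (rule FP[OF H])
      with \<open>c \<noteq> 0\<close> have "Y 1 0 0" by simp
      moreover have "Y (c*0 - b*0) (c*(1/c) - a*0) 0" by (rule FP[OF H])
      with \<open>c \<noteq> 0\<close> have "Y 0 1 0" by simp
      ultimately show False using False by simp
    qed
    have PY: "Y a b c" if H: "P a b c" for a b c
    proof -
      have "Y (c*0 - b*(-1)) (c*0 - a*(-1)) 0" by (rule FP[OF H])
      hence "Y b a 0" by simp
      have "Y (0*0 - a*(-1)) (0*0 - b*(-1)) 0" by (rule FP[OF YP[OF \<open>Y b a 0\<close>]])
      thus ?thesis using Pc[OF H] by simp
    qed
    have ss: "s*s = 1"
    proof (rule ccontr)
      assume ne: "s*s \<noteq> 1"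
      hence ne': "1 - s*s \<noteq> 0" by simp
      have "Y (1 - s*s) (s - s*1) (0 - s*0)" by (rule Ysub[OF Y1s Ysm[OF Ys1]])
      hence "Y (1 - s*s) 0 0" by simp
      from Ysm[OF this, of "1/(1-s*s)"] ne' have "Y 1 0 0" by simp
      moreover have "Y (s - s*1) (1 - s*s) (0 - s*0)" by (rule Ysub[OF Ys1 Ysm[OF Y1s]])
      hence "Y 0 (1 - s*s) 0" by simp
      from Ysm[OF this, of "1/(1-s*s)"] ne' have "Y 0 1 0" by simp
      ultimately show False using False by simp
    qed
    have "(s - 1) * (s + 1) = 0" using ss by (simp add: algebra_simps)
    hence "s = 1 \<or> s = -1" by (auto simp: add_eq_0_iff2)
    thus ?thesis
    proof
      assume "s = 1"
      with Y1s have Y11: "Y 1 1 0" by simp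
      have "Y a b c \<longleftrightarrow> b = a \<and> c = 0" for a b c
      proof
        assume H: "Y a b c"
        have c0: "c = 0" by (rule Pc[OF YP[OF H]])
        show "b = a \<and> c = 0"
        proof (rule ccontr)
          assume "\<not> (b = a \<and> c = 0)"
          with c0 have ne: "b - a \<noteq> 0" by simp
          have "Y (a - a*1) (b - a*1) (c - a*0)" by (rule Ysub[OF H Ysm[OF Y11]])
          hence "Y 0 (b-a) 0" using c0 by simp
          from Ysm[OF this, of "1/(b-a)"] ne have E1: "Y 0 1 0" by simp
          have "Y (1-0) (1-1) (0-0)" by (rule Ysub[OF Y11 E1])
          hence "Y 1 0 0" by simp
          with E1 False show False by simp
        qed
      next
        assume "b = a \<and> c = 0"
        thus "Y a b c" using Ysm[OF Y11, of a] by simp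
      qed
      thus ?thesis using PY by (intro exI[of _ 0]) (simp add: cond1_def)
    next
      assume "s = -1"
      with Y1s have Y11: "Y 1 (-1) 0" by simp
      have "Y a b c \<longleftrightarrow> b = -a \<and> c = 0" for a b c
      proof
        assume H: "Y a b c"
        have c0: "c = 0" by (rule Pc[OF YP[OF H]])
        show "b = -a \<and> c = 0"
        proof (rule ccontr)
          assume "\<not> (b = -a \<and> c = 0)"
          with c0 have ne: "b + a \<noteq> 0" by (auto simp: add_eq_0_iff2)
          have "Y (a - a*1) (b - a*(-1)) (c - a*0)" by (rule Ysub[OF H Ysm[OF Y11]])
          hence "Y 0 (b+a) 0" using c0 by simp
          from Ysm[OF this, of "1/(b+a)"] ne have E1: "Y 0 1 0" by simp
          have "Y (1+0) (-1+1) (0+0)" by (rule Yadd[OF Y11 E1])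
          hence "Y 1 0 0" by simp
          with E1 False show False by simp
        qed
      next
        assume "b = -a \<and> c = 0"
        thus "Y a b c" using Ysm[OF Y11, of a] by simp
      qed
      thus ?thesis using PY by (intro exI[of _ 1]) (simp add: cond1_def)
    qed
  qed
qed

lemma classify:
  fixes W :: "'a::field\<Rightarrow>'a\<Rightarrow>'a\<Rightarrow>'a\<Rightarrow>'a\<Rightarrow>'a\<Rightarrow>bool"
  assumes "goodW W"
  shows "(\<exists>i<4. \<exists>j<4. \<forall>x0 x1 x2 y0 y1 y2. W x0 x1 x2 y0 y1 y2 \<longleftrightarrow> cond1 j x0 x2 x1 \<and> cond1 i y0 y1 y2)
       \<or> (\<exists>\<eta>. \<eta> \<noteq> 0 \<and> (\<forall>x0 x1 x2 y0 y1 y2. W x0 x1 x2 y0 y1 y2 \<longleftrightarrow> x1 = -\<eta>*y2))"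
proof -
  note G = assms[unfolded goodW_def]
  note W0 = G[THEN conjunct1]
  note Wadd = G[THEN conjunct2, THEN conjunct1, rule_format]
  note Wsm = G[THEN conjunct2, THEN conjunct2, THEN conjunct1, rule_format]
  have WBR: "\<And>a0 b0 c0 a1 b1 c1 f0 g0 h0 f1 g1 h1. W a0 b0 c0 a1 b1 c1 \<Longrightarrow>
       W (c0*g0 - b0*h0) 0 (a0*g0 - b0*f0) (c1*g1 - b1*h1) (c1*f1 - a1*h1) 0"
    by (rule G[THEN conjunct2, THEN conjunct2, THEN conjunct2, THEN conjunct1, rule_format])
  note WJ = G[THEN conjunct2, THEN conjunct2, THEN conjunct2, THEN conjunct2, rule_format]
  have Wsub: "W (a0-a0') (b0-b0') (c0-c0') (a1-a1') (b1-b1') (c1-c1')"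
    if "W a0 b0 c0 a1 b1 c1" "W a0' b0' c0' a1' b1' c1'" for a0 b0 c0 a1 b1 c1 a0' b0' c0' a1' b1' c1'
    using Wadd[OF that(1) Wsm[OF that(2), of "-1"]] by simp
  define Y where "Y = (\<lambda>a b c. W 0 0 0 a b c)"
  define P where "P = (\<lambda>a b c. \<exists>x0 x1 x2. W x0 x1 x2 a b c)"
  define Y' where "Y' = (\<lambda>a b c. W a c b 0 0 0)"
  define P' where "P' = (\<lambda>a b c. \<exists>y0 y1 y2. W a c b y0 y1 y2)"
  have "\<exists>i<4. (\<forall>a b c. Y a b c \<longleftrightarrow> cond1 i a b c) \<and> (i \<noteq> 2 \<longrightarrow> (\<forall>a b c. P a b c \<longrightarrow> Y a b c))"
  proof -
    obtain x1 x2 y1 y2 where "W 0 x1 x2 1 y1 y2" using WJ by blast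
    hence ex: "P 1 y1 y2" unfolding P_def by blast
    show ?thesis
    proof (rule point[where Y=Y and P=P, OF _ _ _ _ ex])
      show "Y (a+a') (b+b') (c+c')" if "Y a b c" "Y a' b' c'" for a b c a' b' c'
        using Wadd[OF that[unfolded Y_def]] unfolding Y_def by simp
      show "Y (r*a) (r*b) (r*c)" if "Y a b c" for r a b c
        using Wsm[OF that[unfolded Y_def]] unfolding Y_def by simp
      show "P a b c" if "Y a b c" for a b c using that unfolding Y_def P_def by blast
      show "Y (c*g - b*h) (c*f - a*h) 0" if "P a b c" for a b c f g h
      proof -
        from that obtain x0 x1 x2 where "W x0 x1 x2 a b c" unfolding P_def by blast
        from WBR[OF this, of 0 0 0 g h f] show ?thesis unfolding Y_def by simp
      qed
    qed
  qed
  then obtain i where i: "i < 4" "\<And>a b c. Y a b c \<longleftrightarrow> cond1 i a b c"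
    "i \<noteq> 2 \<Longrightarrow> P a b c \<Longrightarrow> Y a b c" for a b c by blast
  have "\<exists>j<4. (\<forall>a b c. Y' a b c \<longleftrightarrow> cond1 j a b c) \<and> (j \<noteq> 2 \<longrightarrow> (\<forall>a b c. P' a b c \<longrightarrow> Y' a b c))"
  proof -
    obtain x1 x2 y1 y2 where "W 1 x1 x2 0 y1 y2" using WJ by blast
    hence ex: "P' 1 x2 x1" unfolding P'_def by blast
    show ?thesis
    proof (rule point[where Y=Y' and P=P', OF _ _ _ _ ex])
      show "Y' (a+a') (b+b') (c+c')" if "Y' a b c" "Y' a' b' c'" for a b c a' b' c'
        using Wadd[OF that[unfolded Y'_def]] unfolding Y'_def by simp
      show "Y' (r*a) (r*b) (r*c)" if "Y' a b c" for r a b c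
        using Wsm[OF that[unfolded Y'_def]] unfolding Y'_def by simp
      show "P' a b c" if "Y' a b c" for a b c using that unfolding Y'_def P'_def by blast
      show "Y' (c*g - b*h) (c*f - a*h) 0" if "P' a b c" for a b c f g h
      proof -
        from that obtain y0 y1 y2 where Wy: "W a c b y0 y1 y2" unfolding P'_def by blast
        have "W (b*(-h) - c*(-g)) 0 (a*(-h) - c*(-f)) (y2*0 - y1*0) (y2*0 - y0*0) 0" by (rule WBR[OF Wy])
        then show ?thesis unfolding Y'_def
          by (simp add: algebra_simps)
      qed
    qed
  qed
  then obtain j where j: "j < 4" "\<And>a b c. Y' a b c \<longleftrightarrow> cond1 j a b c"
    "j \<noteq> 2 \<Longrightarrow> P' a b c \<Longrightarrow> Y' a b c" for a b c by blast
  have X: "W x0 x1 x2 0 0 0 \<longleftrightarrow> cond1 j x0 x2 x1" for x0 x1 x2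
    using j(2)[of x0 x2 x1] unfolding Y'_def by simp
  have Yc: "W 0 0 0 y0 y1 y2 \<longleftrightarrow> cond1 i y0 y1 y2" for y0 y1 y2
    using i(2)[of y0 y1 y2] unfolding Y_def by simp
  show ?thesis
  proof (cases "\<forall>x0 x1 x2 y0 y1 y2. W x0 x1 x2 y0 y1 y2 \<longrightarrow> W 0 0 0 y0 y1 y2")
    case True
    have "W x0 x1 x2 y0 y1 y2 \<longleftrightarrow> cond1 j x0 x2 x1 \<and> cond1 i y0 y1 y2" for x0 x1 x2 y0 y1 y2
    proof
      assume H: "W x0 x1 x2 y0 y1 y2"
      with True have H2: "W 0 0 0 y0 y1 y2" by blast
      from Wsub[OF H H2] have "W x0 x1 x2 0 0 0" by simp
      with H2 show "cond1 j x0 x2 x1 \<and> cond1 i y0 y1 y2" using X Yc by blast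
    next
      assume "cond1 j x0 x2 x1 \<and> cond1 i y0 y1 y2"
      hence "W x0 x1 x2 0 0 0" "W 0 0 0 y0 y1 y2" using X Yc by blast+
      from Wadd[OF this] show "W x0 x1 x2 y0 y1 y2" by simp
    qed
    thus ?thesis using i(1) j(1) by blast
  next
    case False
    then obtain u0 u1 u2 v0 v1 v2 where U: "W u0 u1 u2 v0 v1 v2" and nY: "\<not> W 0 0 0 v0 v1 v2" by blast
    have i2: "i = 2"
    proof (rule ccontr)
      assume "i \<noteq> 2"
      from i(3)[OF this, of v0 v1 v2] U nY show False unfolding P_def Y_def by blast
    qed
    have Yc2: "W 0 0 0 y0 y1 y2 \<longleftrightarrow> y2 = 0" for y0 y1 y2 using Yc i2 by (simp add: cond1_def)
    with nY have v2: "v2 \<noteq> 0" by blast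
    have nX: "\<not> W u0 u1 u2 0 0 0"
    proof
      assume "W u0 u1 u2 0 0 0"
      from Wsub[OF U this] nY show False by simp
    qed
    have j2: "j = 2"
    proof (rule ccontr)
      assume "j \<noteq> 2"
      from j(3)[OF this, of u0 u2 u1] U nX show False unfolding P'_def Y'_def by blast
    qed
    have X2: "W x0 x1 x2 0 0 0 \<longleftrightarrow> x1 = 0" for x0 x1 x2 using X j2 by (simp add: cond1_def)
    with nX have u1: "u1 \<noteq> 0" by blast
    define \<eta> where "\<eta> = - u1 / v2"
    have "\<eta> \<noteq> 0" using u1 v2 by (simp add: \<eta>_def)
    moreover have "W x0 x1 x2 y0 y1 y2 \<longleftrightarrow> x1 = -\<eta>*y2" for x0 x1 x2 y0 y1 y2
    proof -
      define l where "l = y2 / v2"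
      have Ul: "W (l*u0) (l*u1) (l*u2) (l*v0) (l*v1) (l*v2)" by (rule Wsm[OF U])
      have Yl: "W 0 0 0 (y0 - l*v0) (y1 - l*v1) (y2 - l*v2)"
        using Yc2 v2 by (simp add: l_def)
      show ?thesis
      proof
        assume H: "W x0 x1 x2 y0 y1 y2"
        from Wsub[OF Wsub[OF H Ul] Yl] have "W (x0 - l*u0) (x1 - l*u1) (x2 - l*u2) 0 0 0" by simp
        hence "x1 - l*u1 = 0" using X2 by blast
        thus "x1 = -\<eta>*y2" using v2 by (simp add: l_def \<eta>_def field_simps)
      next
        assume H: "x1 = -\<eta>*y2"
        have "x1 - l*u1 = 0" using H v2 by (simp add: l_def \<eta>_def field_simps)
        hence "W (x0 - l*u0) (x1 - l*u1) (x2 - l*u2) 0 0 0" using X2 by blast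
        from Wadd[OF Wadd[OF this Yl] Ul] show "W x0 x1 x2 y0 y1 y2" by simp
      qed
    qed
    ultimately show ?thesis by blast
  qed
qed



lemma mk_add[simp]: "oadd (mk q a0 a1 a2 b0 b1 b2) (mk q c0 c1 c2 d0 d1 d2) =
  mk q (a0+c0) (a1+c1) (a2+c2) (b0+d0) (b1+d1) (b2+d2)"
proof -
  have h: "[:a,b-a:] + [:c,d-c:] = [:a+c, (b+d)-(a+c):]" for a b c d :: 'a by (simp add: algebra_simps)
  show ?thesis unfolding mk_def oadd_def prod.case distrib_left[symmetric] h ..
qed

lemma mk_smult[simp]: "osmult r (mk q a0 a1 a2 b0 b1 b2) = mk q (r*a0) (r*a1) (r*a2) (r*b0) (r*b1) (r*b2)"
proof -
  have h: "smult r [:a,b-a:] = [:r*a, r*b-r*a:]" for a b :: 'a by (simp add: algebra_simps)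
  show ?thesis unfolding mk_def osmult_def prod.case mult_smult_right[symmetric] h ..
qed

lemma oadd_zero[simp]: "oadd x ozero = x"
  by (cases x) (simp add: oadd_def ozero_def)

lemma ov_mk:
  fixes q :: "'a::field poly"
  shows "ov0 (q*pt) = mk q 0 0 0 1 0 0" "ov1 (q*pt) = mk q 0 0 0 0 1 0" "ov2 (q*pt) = mk q 0 0 0 0 0 1"
    "ov0 (q*ptm1) = mk q (-1) 0 0 0 0 0" "ov1 (q*ptm1) = mk q 0 (-1) 0 0 0 0" "ov2 (q*ptm1) = mk q 0 0 (-1) 0 0 0"
  by (simp_all add: mk_def ov0_def ov1_def ov2_def)

lemma kspan_mem: "u \<in> kspan (x#xs) \<longleftrightarrow> (\<exists>c y. u = oadd (osmult c x) y \<and> y \<in> kspan xs)"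
  by simp

lemma cond1_neg[simp]: "cond1 j (-a) (-b) (-c) \<longleftrightarrow> cond1 j a b c"
  by (auto simp: cond1_def)

definition prodW :: "nat \<Rightarrow> nat \<Rightarrow> 'a::field\<Rightarrow>'a\<Rightarrow>'a\<Rightarrow>'a\<Rightarrow>'a\<Rightarrow>'a\<Rightarrow>bool" where
  "prodW i j = (\<lambda>x0 x1 x2 y0 y1 y2. cond1 j x0 x2 x1 \<and> cond1 i y0 y1 y2)"

definition etaW :: "'a::field \<Rightarrow> 'a\<Rightarrow>'a\<Rightarrow>'a\<Rightarrow>'a\<Rightarrow>'a\<Rightarrow>'a\<Rightarrow>bool" where
  "etaW \<eta> = (\<lambda>x0 x1 x2 y0 y1 y2. x1 = -\<eta>*y2)"

lemma type_ii_iff: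
  fixes q :: "'a::field poly"
  shows "type_ii q S \<longleftrightarrow> (\<exists>\<eta>. \<eta> \<noteq> 0 \<and> S = Sset q (etaW \<eta>))"
proof -
  have K: "kspan [ov0 (q * pt), ov1 (q * pt), ov0 (q * ptm1), ov2 (q * ptm1),
        oadd (ov2 (q * pt)) (osmult \<eta> (ov1 (q * ptm1)))] = Sset q (etaW \<eta>)" for \<eta>
  proof (intro equalityI subsetI)
    fix u assume "u \<in> kspan [ov0 (q * pt), ov1 (q * pt), ov0 (q * ptm1), ov2 (q * ptm1),
        oadd (ov2 (q * pt)) (osmult \<eta> (ov1 (q * ptm1)))]"
    thus "u \<in> Sset q (etaW \<eta>)" unfolding ov_mk by (auto simp: Sset_def etaW_def mult.commute, blast)
  next
    fix u assume "u \<in> Sset q (etaW \<eta>)"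
    then obtain x0 x1 x2 y0 y1 y2 where u: "u = mk q x0 x1 x2 y0 y1 y2" and e: "x1 = -\<eta>*y2"
      unfolding Sset_def etaW_def by blast
    have "u = oadd (osmult y0 (mk q 0 0 0 1 0 0)) (oadd (osmult y1 (mk q 0 0 0 0 1 0))
       (oadd (osmult (-x0) (mk q (-1) 0 0 0 0 0)) (oadd (osmult (-x2) (mk q 0 0 (-1) 0 0 0))
       (oadd (osmult y2 (oadd (mk q 0 0 0 0 0 1) (osmult \<eta> (mk q 0 (-1) 0 0 0 0)))) ozero))))"
      unfolding u e by (simp add: mult.commute)
    thus "u \<in> kspan [ov0 (q * pt), ov1 (q * pt), ov0 (q * ptm1), ov2 (q * ptm1),
        oadd (ov2 (q * pt)) (osmult \<eta> (ov1 (q * ptm1)))]"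
      unfolding ov_mk kspan_mem kspan.simps by blast
  qed
  show ?thesis unfolding type_ii_def K ..
qed

definition span1 :: "'a::field \<Rightarrow> 'a \<Rightarrow> 'a \<Rightarrow> 'a \<Rightarrow> 'a \<Rightarrow> 'a \<Rightarrow> bool" where
  "span1 e d g a b c \<longleftrightarrow> (\<exists>c1 c2 c3. a = c1*e + c2*d \<and> b = c1*e - c2*d \<and> c = c3*(e*d*g))"

lemma kspan_i:
  fixes q :: "'a::field poly"
  shows "kspan
       [osmult \<epsilon> (oadd (ov0 (q * pt)) (ov1 (q * pt))),
        osmult \<delta> (oadd (ov0 (q * pt)) (osmult (-1) (ov1 (q * pt)))),
        osmult (\<epsilon> * \<delta> * \<gamma>) (ov2 (q * pt)),
        osmult \<epsilon>' (oadd (ov0 (q * ptm1)) (ov2 (q * ptm1))),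
        osmult \<delta>' (oadd (ov0 (q * ptm1)) (osmult (-1) (ov2 (q * ptm1)))),
        osmult (\<epsilon>' * \<delta>' * \<gamma>') (ov1 (q * ptm1))] =
     Sset q (\<lambda>x0 x1 x2 y0 y1 y2. span1 \<epsilon>' \<delta>' \<gamma>' (-x0) (-x2) (-x1) \<and> span1 \<epsilon> \<delta> \<gamma> y0 y1 y2)"
  (is "kspan [?g1, ?g2, ?g3, ?g4, ?g5, ?g6] = _")
proof (intro equalityI subsetI)
  fix u assume "u \<in> kspan [?g1, ?g2, ?g3, ?g4, ?g5, ?g6]"
  then obtain c1 c2 c3 c4 c5 c6 where u: "u = oadd (osmult c1 ?g1) (oadd (osmult c2 ?g2) (oadd (osmult c3 ?g3)
     (oadd (osmult c4 ?g4) (oadd (osmult c5 ?g5) (oadd (osmult c6 ?g6) ozero)))))"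
    unfolding kspan_mem kspan.simps singleton_iff by blast
  have U: "u = mk q (-(c4*\<epsilon>' + c5*\<delta>')) (-(c6*(\<epsilon>'*\<delta>'*\<gamma>'))) (-(c4*\<epsilon>' - c5*\<delta>')) (c1*\<epsilon> + c2*\<delta>) (c1*\<epsilon> - c2*\<delta>) (c3*(\<epsilon>*\<delta>*\<gamma>))"
    unfolding u ov_mk by (simp add: algebra_simps)
  have S: "span1 \<epsilon>' \<delta>' \<gamma>' (c4*\<epsilon>' + c5*\<delta>') (c4*\<epsilon>' - c5*\<delta>') (c6*(\<epsilon>'*\<delta>'*\<gamma>'))"
    "span1 \<epsilon> \<delta> \<gamma> (c1*\<epsilon> + c2*\<delta>) (c1*\<epsilon> - c2*\<delta>) (c3*(\<epsilon>*\<delta>*\<gamma>))"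
    unfolding span1_def by blast+
  show "u \<in> Sset q (\<lambda>x0 x1 x2 y0 y1 y2. span1 \<epsilon>' \<delta>' \<gamma>' (-x0) (-x2) (-x1) \<and> span1 \<epsilon> \<delta> \<gamma> y0 y1 y2)"
    unfolding Sset_def
    apply (rule CollectI, rule exI[of _ "-(c4*\<epsilon>' + c5*\<delta>')"], rule exI[of _ "-(c6*(\<epsilon>'*\<delta>'*\<gamma>'))"],
      rule exI[of _ "-(c4*\<epsilon>' - c5*\<delta>')"], rule exI[of _ "c1*\<epsilon> + c2*\<delta>"], rule exI[of _ "c1*\<epsilon> - c2*\<delta>"],
      rule exI[of _ "c3*(\<epsilon>*\<delta>*\<gamma>)"])
    unfolding minus_minus using U S by blast
next
  fix u assume "u \<in> Sset q (\<lambda>x0 x1 x2 y0 y1 y2. span1 \<epsilon>' \<delta>' \<gamma>' (-x0) (-x2) (-x1) \<and> span1 \<epsilon> \<delta> \<gamma> y0 y1 y2)"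
  then obtain x0 x1 x2 y0 y1 y2 where u: "u = mk q x0 x1 x2 y0 y1 y2"
    and s: "span1 \<epsilon>' \<delta>' \<gamma>' (-x0) (-x2) (-x1)" "span1 \<epsilon> \<delta> \<gamma> y0 y1 y2"
    unfolding Sset_def by blast
  from s obtain c1 c2 c3 c4 c5 c6 where e: "-x0 = c4*\<epsilon>' + c5*\<delta>'" "-x2 = c4*\<epsilon>' - c5*\<delta>'" "-x1 = c6*(\<epsilon>'*\<delta>'*\<gamma>')"
    "y0 = c1*\<epsilon> + c2*\<delta>" "y1 = c1*\<epsilon> - c2*\<delta>" "y2 = c3*(\<epsilon>*\<delta>*\<gamma>)"
    unfolding span1_def by blast
  have e': "x0 = -(c4*\<epsilon>' + c5*\<delta>')" "x2 = -(c4*\<epsilon>' - c5*\<delta>')" "x1 = -(c6*(\<epsilon>'*\<delta>'*\<gamma>'))"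
    by (metis e(1) minus_minus, metis e(2) minus_minus, metis e(3) minus_minus)
  have "u = oadd (osmult c1 ?g1) (oadd (osmult c2 ?g2) (oadd (osmult c3 ?g3)
     (oadd (osmult c4 ?g4) (oadd (osmult c5 ?g5) (oadd (osmult c6 ?g6) ozero)))))"
    unfolding u e' e(4-6) ov_mk by (simp add: algebra_simps)
  thus "u \<in> kspan [?g1, ?g2, ?g3, ?g4, ?g5, ?g6]"
    unfolding kspan_mem kspan.simps singleton_iff by blast
qed

lemma c12: fixes a b :: "'a::field" assumes "(2::'a) \<noteq> 0"
  shows "(\<exists>c1 c2. a = c1 + c2 \<and> b = c1 - c2) \<longleftrightarrow> True"
proof -
  define c1 where "c1 = (a+b)/2"
  have "2 * c1 = a+b" using assms(1) unfolding c1_def by simp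
  hence h: "c1 + c1 = a + b" by (metis mult_2)
  have "a = c1 + (a - c1) \<and> b = c1 - (a - c1)" using h by (simp add: algebra_simps)
  thus ?thesis by blast
qed

lemma span1_cond:
  assumes "(2::'a::field) \<noteq> 0" "e \<in> {0,1}" "d \<in> {0,1}" "g \<in> {0,1}" "e + d \<noteq> (0::'a)"
  shows "\<exists>i<4. \<forall>a b c. span1 e d g a b c \<longleftrightarrow> cond1 i a b c"
proof -
  have two: "(1::'a) + 1 \<noteq> 0" using assms(1) by (metis one_add_one)
  note c12 = c12[OF assms(1)]
  have h: "e = 0 \<or> e = 1" "d = 0 \<or> d = 1" "g = 0 \<or> g = 1" using assms(2-4) by simp_all
  consider "e = 1" "d = 0" | "e = 0" "d = 1" | "e = 1" "d = 1" "g = 0" | "e = 1" "d = 1" "g = 1"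
    using h assms(5) by (elim disjE) simp_all
  thus ?thesis
  proof cases
    case 1 thus ?thesis by (intro exI[of _ 0]) (auto simp: span1_def cond1_def)
  next
    case 2 thus ?thesis by (intro exI[of _ 1]) (auto simp: span1_def cond1_def)
  next
    case 3 thus ?thesis by (intro exI[of _ 2]) (auto simp: span1_def cond1_def c12)
  next
    case 4 thus ?thesis by (intro exI[of _ 3]) (auto simp: span1_def cond1_def c12)
  qed
qed

lemma span1_cond_conv:
  assumes "(2::'a::field) \<noteq> 0" "i < 4"
  shows "\<exists>e d g. e \<in> {0,1} \<and> d \<in> {0,1} \<and> g \<in> {0,1} \<and> e + d \<noteq> (0::'a) \<and>
     (\<forall>a b c. span1 e d g a b c \<longleftrightarrow> cond1 i a b c)"
proof -
  have two: "(1::'a) + 1 \<noteq> 0" using assms(1) by (metis one_add_one)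
  note c12 = c12[OF assms(1)]
  from assms(2) consider "i = 0" | "i = 1" | "i = 2" | "i = 3" by linarith
  thus ?thesis
  proof cases
    case 1 thus ?thesis by (intro exI[of _ 1] exI[of _ 0]) (auto simp: span1_def cond1_def)
  next
    case 2 thus ?thesis by (intro exI[of _ 0] exI[of _ 1]) (auto simp: span1_def cond1_def)
  next
    case 3 thus ?thesis using two by (intro exI[of _ 1] exI[of _ 1] exI[of _ 0]) (auto simp: span1_def cond1_def c12)
  next
    case 4 thus ?thesis using two by (intro exI[of _ 1] exI[of _ 1] exI[of _ 1]) (auto simp: span1_def cond1_def c12)
  qed
qed



lemma type_i_iff:
  fixes q :: "'a::field poly"
  assumes two: "(2::'a) \<noteq> 0"
  shows "type_i q S \<longleftrightarrow> (\<exists>i<4. \<exists>j<4. S = Sset q (prodW i j))"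
proof
  assume "type_i q S"
  then obtain e d g e' d' g' where P: "e \<in> {0,1}" "d \<in> {0,1}" "g \<in> {0,1}" "e' \<in> {0,1}" "d' \<in> {0,1}" "g' \<in> {0,1}"
    "e + d \<noteq> 0" "e' + d' \<noteq> 0" and S: "S = kspan
       [osmult e (oadd (ov0 (q * pt)) (ov1 (q * pt))),
        osmult d (oadd (ov0 (q * pt)) (osmult (-1) (ov1 (q * pt)))),
        osmult (e * d * g) (ov2 (q * pt)),
        osmult e' (oadd (ov0 (q * ptm1)) (ov2 (q * ptm1))),
        osmult d' (oadd (ov0 (q * ptm1)) (osmult (-1) (ov2 (q * ptm1)))),
        osmult (e' * d' * g') (ov1 (q * ptm1))]"
    unfolding type_i_def by blast
  from span1_cond[OF two P(1) P(2) P(3) P(7)] obtain i where i: "i < 4" "\<And>a b c. span1 e d g a b c \<longleftrightarrow> cond1 i a b c"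
    by blast
  from span1_cond[OF two P(4) P(5) P(6) P(8)] obtain j where j: "j < 4" "\<And>a b c. span1 e' d' g' a b c \<longleftrightarrow> cond1 j a b c"
    by blast
  have SS: "S = Sset q (prodW i j)" unfolding S kspan_i prodW_def i(2) j(2) cond1_neg ..
  show "\<exists>i<4. \<exists>j<4. S = Sset q (prodW i j)"
    apply (rule exI[of _ i], rule conjI[OF i(1)], rule exI[of _ j], rule conjI[OF j(1)])
    by (rule SS)
next
  assume "\<exists>i<4. \<exists>j<4. S = Sset q (prodW i j)"
  then obtain i j where i: "i < 4" and j: "j < 4" and S: "S = Sset q (prodW i j)" by blast
  from span1_cond_conv[OF two i] obtain e d g where P0: "e \<in> {0,1} \<and> d \<in> {0,1} \<and> g \<in> {0,1} \<and> e + d \<noteq> (0::'a) \<and>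
     (\<forall>a b c. span1 e d g a b c \<longleftrightarrow> cond1 i a b c)" by (elim exE)
  hence P: "e \<in> {0,1}" "d \<in> {0,1}" "g \<in> {0,1}" "e + d \<noteq> 0"
    "\<And>a b c. span1 e d g a b c \<longleftrightarrow> cond1 i a b c" by simp_all
  from span1_cond_conv[OF two j] obtain e' d' g' where P0': "e' \<in> {0,1} \<and> d' \<in> {0,1} \<and> g' \<in> {0,1} \<and> e' + d' \<noteq> (0::'a) \<and>
     (\<forall>a b c. span1 e' d' g' a b c \<longleftrightarrow> cond1 j a b c)" by (elim exE)
  hence P': "e' \<in> {0,1}" "d' \<in> {0,1}" "g' \<in> {0,1}" "e' + d' \<noteq> 0"
    "\<And>a b c. span1 e' d' g' a b c \<longleftrightarrow> cond1 j a b c" by simp_all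
  have K: "S = kspan
       [osmult e (oadd (ov0 (q * pt)) (ov1 (q * pt))),
        osmult d (oadd (ov0 (q * pt)) (osmult (-1) (ov1 (q * pt)))),
        osmult (e * d * g) (ov2 (q * pt)),
        osmult e' (oadd (ov0 (q * ptm1)) (ov2 (q * ptm1))),
        osmult d' (oadd (ov0 (q * ptm1)) (osmult (-1) (ov2 (q * ptm1)))),
        osmult (e' * d' * g') (ov1 (q * ptm1))]"
    unfolding S kspan_i prodW_def P(5) P'(5) cond1_neg ..
  show "type_i q S" unfolding type_i_def
    apply (rule exI[of _ e], rule exI[of _ d], rule exI[of _ g], rule exI[of _ e'], rule exI[of _ d'], rule exI[of _ g'])
    using P(1-4) P'(1-4) K by blast
qed

lemma goodW_prod: "goodW (prodW i j)"
proof -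
  have c0: "cond1 i 0 0 0" for i :: nat by (simp add: cond1_def)
  have ca: "cond1 i (a+a') (b+b') (c+c')" if "cond1 i a b c" "cond1 i a' b' c'" for i and a b c a' b' c' :: 'a
    using that by (auto simp: cond1_def)
  have cs: "cond1 i (r*a) (r*b) (r*c)" if "cond1 i a b c" for i and r a b c :: 'a
    using that by (auto simp: cond1_def)
  have c1: "cond1 i (c*g - b*h) (c*f - a*h) 0" if "cond1 i a b c" for i and a b c f g h :: 'a
    using that by (auto simp: cond1_def algebra_simps)
  have c2: "cond1 j (c*g - b*h) (a*g - b*f) 0" if "cond1 j a c b" for j and a b c f g h :: 'a
    using that by (auto simp: cond1_def algebra_simps)
  have cj: "\<exists>b c. cond1 i a b c" for i and a :: 'a
    by (rule exI[of _ "if i = 1 then -a else a"], rule exI[of _ 0]) (simp add: cond1_def)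
  have J: "\<exists>x1 x2 y1 y2. prodW i j \<alpha> x1 x2 \<beta> y1 y2" for \<alpha> \<beta> :: 'a
  proof -
    obtain x2 x1 where "cond1 j \<alpha> x2 x1" using cj by blast
    moreover obtain y1 y2 where "cond1 i \<beta> y1 y2" using cj by blast
    ultimately show ?thesis unfolding prodW_def by blast
  qed
  show ?thesis unfolding goodW_def
    apply (intro conjI allI impI)
    subgoal by (simp add: prodW_def c0)
    subgoal unfolding prodW_def using ca by blast
    subgoal unfolding prodW_def using cs by blast
    subgoal unfolding prodW_def using c1 c2 by blast
    subgoal by (rule J)
    done
qed

lemma goodW_eta: "goodW (etaW \<eta>)"
  unfolding goodW_def etaW_def
  apply (intro conjI allI impI)
  subgoal by simp
  subgoal by (simp add: algebra_simps)
  subgoal by (simp add: algebra_simps)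
  subgoal by simp
  subgoal by (rule exI[of _ 0], rule exI[of _ 0], rule exI[of _ 0], rule exI[of _ 0]) simp
  done



theorem proposition4p8:
  fixes q :: "'a::field poly" and I :: "'a onsager set"
  assumes "CHAR('a) \<noteq> 2" and "q \<noteq> 0"
  shows "(is_lie_ideal I \<and> J_of I = pideal q) \<longleftrightarrow>
         (\<exists>S. is_direct_sum I (OJ (pideal (q * pt * ptm1))) S \<and> (type_i q S \<or> type_ii q S))"
proof -
  have two: "(2::'a) \<noteq> 0" by (rule two_ne0[OF assms(1)])
  show ?thesis
  proof
    assume H: "is_lie_ideal I \<and> J_of I = pideal q"
    from fwd[OF H[THEN conjunct1] H[THEN conjunct2] assms(2)] obtain W where G: "goodW W" and IW: "I = Iset q W"
      by blast
    from classify[OF G] show "\<exists>S. is_direct_sum I (OJ (pideal (q * pt * ptm1))) S \<and> (type_i q S \<or> type_ii q S)"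
    proof
      assume "\<exists>i<4. \<exists>j<4. \<forall>x0 x1 x2 y0 y1 y2. W x0 x1 x2 y0 y1 y2 \<longleftrightarrow> cond1 j x0 x2 x1 \<and> cond1 i y0 y1 y2"
      then obtain i j where ij: "i < 4" "j < 4"
        and E: "\<And>x0 x1 x2 y0 y1 y2. W x0 x1 x2 y0 y1 y2 \<longleftrightarrow> cond1 j x0 x2 x1 \<and> cond1 i y0 y1 y2" by blast
      have "W = prodW i j" unfolding prodW_def by (intro ext) (simp add: E)
      hence IW': "I = Iset q (prodW i j)" using IW by simp
      have z: "prodW i j 0 0 0 0 0 0" by (simp add: prodW_def cond1_def)
      have "is_direct_sum I (OJ (pideal (q * pt * ptm1))) (Sset q (prodW i j))"
        using decomp[of q "prodW i j" I, OF assms(2) z] IW' by simp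
      moreover have "type_i q (Sset q (prodW i j))" using type_i_iff[OF two] ij by blast
      ultimately show ?thesis by blast
    next
      assume "\<exists>\<eta>. \<eta> \<noteq> 0 \<and> (\<forall>x0 x1 x2 y0 y1 y2. W x0 x1 x2 y0 y1 y2 \<longleftrightarrow> x1 = -\<eta>*y2)"
      then obtain \<eta> where n: "\<eta> \<noteq> 0"
        and E: "\<And>x0 x1 x2 y0 y1 y2. W x0 x1 x2 y0 y1 y2 \<longleftrightarrow> x1 = -\<eta>*y2" by blast
      have "W = etaW \<eta>" unfolding etaW_def by (intro ext) (simp add: E)
      hence IW': "I = Iset q (etaW \<eta>)" using IW by simp
      have z: "etaW \<eta> 0 0 0 0 0 0" by (simp add: etaW_def)
      have "is_direct_sum I (OJ (pideal (q * pt * ptm1))) (Sset q (etaW \<eta>))"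
        using decomp[of q "etaW \<eta>" I, OF assms(2) z] IW' by simp
      moreover have "type_ii q (Sset q (etaW \<eta>))" using type_ii_iff n by blast
      ultimately show ?thesis by blast
    qed
  next
    assume "\<exists>S. is_direct_sum I (OJ (pideal (q * pt * ptm1))) S \<and> (type_i q S \<or> type_ii q S)"
    then obtain S where D: "is_direct_sum I (OJ (pideal (q * pt * ptm1))) S" and T: "type_i q S \<or> type_ii q S"
      by blast
    from T show "is_lie_ideal I \<and> J_of I = pideal q"
    proof
      assume "type_i q S"
      then obtain i j where "S = Sset q (prodW i j)" using type_i_iff[OF two] by blast
      moreover have z: "prodW i j 0 0 0 0 0 0" by (simp add: prodW_def cond1_def)
      ultimately have "I = Iset q (prodW i j)" using decomp[of q "prodW i j" I, OF assms(2) z] D by simp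
      thus ?thesis using ideal_of[OF goodW_prod] by simp
    next
      assume "type_ii q S"
      then obtain \<eta> where "S = Sset q (etaW \<eta>)" using type_ii_iff by blast
      moreover have z: "etaW \<eta> 0 0 0 0 0 0" by (simp add: etaW_def)
      ultimately have "I = Iset q (etaW \<eta>)" using decomp[of q "etaW \<eta>" I, OF assms(2) z] D by simp
      thus ?thesis using ideal_of[OF goodW_eta] by simp
    qed
  qed
qed


end
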